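(* Let $\mathcal{A}$ be a collection of pairwise non-parallel hyperplanes in $Q=S_1\times\cdots\times S_n$, let $0\le a\le n$, let $\mathbb{P}_a$ be a probability measure on $Q_a$, let $\delta_{a+1},\dots,\delta_n\in[0,1/2]$, and let $\mathbb{P}_k$ ($a\le k\le n$) be defined as in the context. Let $a\le k\le n$ and let $A$ be any hyperplane in $Q$ with $F(A)\subseteq[k]$ (viewed as a subset of $Q_k$). If $F(A) = I\cup J$ with $I\subseteq[a]$ and $J\subseteq[a+1,k]$, then $\mathbb{P}_k(A)\le c(I)\,\nu(J)$.
   Context: $S_1,\dots,S_n$ are finite sets each with at least two elements; $Q_k = S_1\times\cdots\times S_k$. A hyperplane is $A = A_1\times\cdots\times A_n\subseteq Q$ with each $A_k$ either $S_k$ or a singleton in $S_k$; $F(A)=\{k: A_k\text{ is a singleton}\}$; hyperplanes are parallel if they have the same $F$. Hyperplanes in $\mathcal{A}$ have non-empty $F(A)$; write $\mathcal{A}=\{A_F:F\in\mathcal{F}\}$. A set $X\subseteq Q_k$ is identified with $X\times S_{k+1}\times\cdots\times S_n$; a hyperplane with $F(A)\subseteq[k]$ is viewed as a subset of $Q_k$. Let $\mathcal{F}_k=\{F\in\mathcal{F}:F\subseteq[k]\}$, $\mathcal{N}_k=\mathcal{F}_k\setminus\mathcal{F}_{k-1}$, $B_k=\bigcup_{F\in\mathcal{N}_k}A_F\subseteq Q_k$. For $k>a$, given $\mathbb{P}_{k-1}$ on $Q_{k-1}$, let $\alpha_k(x)=|\{y\in S_k:(x,y)\in B_k\}|/|S_k|$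 for $x\in Q_{k-1}$, and define $\mathbb{P}_k(x,y)=\max\{0,\frac{\alpha_k(x)-\delta_k}{\alpha_k(x)(1-\delta_k)}\}\frac{\mathbb{P}_{k-1}(x)}{|S_k|}$ if $(x,y)\in B_k$ and $\mathbb{P}_k(x,y)=\min\{\frac{1}{1-\alpha_k(x)},\frac{1}{1-\delta_k}\}\frac{\mathbb{P}_{k-1}(x)}{|S_k|}$ otherwise. For $I\subseteq[a]$, $c(I)=\max\{\mathbb{P}_a(H):H\text{ a hyperplane in }Q_a\text{ with }F(H)=I\}$; for $J\subseteq[a+1,n]$, $\nu(J)=\prod_{j\in J}\frac{1}{(1-\delta_j)|S_j|}$. *)

theory Defs
  imports Complex_Main "HOL-Library.FuncSet"
begin

text \<open>Coordinates are indexed by 1..n; S i is the i-th factor.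
  A hyperplane with fixed-coordinate set F and values v (v i \<in> S i for i \<in> F),
  viewed inside Q_k (for F \<subseteq> {1..k}):\<close>

definition Qk :: "(nat \<Rightarrow> 'a set) \<Rightarrow> nat \<Rightarrow> (nat \<Rightarrow> 'a) set" where
  "Qk S k = PiE {1..k} S"

definition hyp :: "(nat \<Rightarrow> 'a set) \<Rightarrow> nat \<Rightarrow> nat set \<Rightarrow> (nat \<Rightarrow> 'a) \<Rightarrow> (nat \<Rightarrow> 'a) set" where
  "hyp S k F v = {x \<in> Qk S k. \<forall>i\<in>F. x i = v i}"

text \<open>The arrangement: \<A> = {A_F : F \<in> \<F>}, A_F has fixed set F and values val F.
  B_k = union of A_F over F \<in> \<F> with F \<subseteq> [k], F \<not>\<subseteq> [k-1] (i.e. k \<in> F).\<close>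

definition Bset :: "(nat \<Rightarrow> 'a set) \<Rightarrow> nat set set \<Rightarrow> (nat set \<Rightarrow> nat \<Rightarrow> 'a) \<Rightarrow> nat \<Rightarrow> (nat \<Rightarrow> 'a) set" where
  "Bset S \<F> val k = (\<Union>F\<in>{F\<in>\<F>. F \<subseteq> {1..k} \<and> \<not> F \<subseteq> {1..k-1}}. hyp S k F (val F))"

definition alpha :: "(nat \<Rightarrow> 'a set) \<Rightarrow> nat set set \<Rightarrow> (nat set \<Rightarrow> nat \<Rightarrow> 'a) \<Rightarrow> nat \<Rightarrow> (nat \<Rightarrow> 'a) \<Rightarrow> real" where
  "alpha S \<F> val k x = real (card {y \<in> S k. x(k := y) \<in> Bset S \<F> val k}) / real (card (S k))"

text \<open>The measures P_k, given P_a (point masses on Q_a); for k \<le> a we return P_a.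
  For k > a, a point x of Q_k is split as (restrict x {1..k-1}, x k).\<close>

primrec Pk :: "(nat \<Rightarrow> 'a set) \<Rightarrow> nat set set \<Rightarrow> (nat set \<Rightarrow> nat \<Rightarrow> 'a) \<Rightarrow> (nat \<Rightarrow> real)
    \<Rightarrow> nat \<Rightarrow> ((nat \<Rightarrow> 'a) \<Rightarrow> real) \<Rightarrow> nat \<Rightarrow> (nat \<Rightarrow> 'a) \<Rightarrow> real" where
  "Pk S \<F> val \<delta> a Pa 0 x = Pa x"
| "Pk S \<F> val \<delta> a Pa (Suc k) x =
     (if Suc k \<le> a then Pa x else
      (let x' = restrict x {1..k};
           al = alpha S \<F> val (Suc k) x';
           d = \<delta> (Suc k);
           p = Pk S \<F> val \<delta> a Pa k x' / real (card (S (Suc k)))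
       in if x \<in> Bset S \<F> val (Suc k)
          then max 0 ((al - d) / (al * (1 - d))) * p
          else min (1 / (1 - al)) (1 / (1 - d)) * p))"

definition cI :: "(nat \<Rightarrow> 'a set) \<Rightarrow> nat \<Rightarrow> ((nat \<Rightarrow> 'a) \<Rightarrow> real) \<Rightarrow> nat set \<Rightarrow> real" where
  "cI S a Pa I = Max ((\<lambda>v. sum Pa (hyp S a I v)) ` PiE I S)"

definition nu :: "(nat \<Rightarrow> 'a set) \<Rightarrow> (nat \<Rightarrow> real) \<Rightarrow> nat set \<Rightarrow> real" where
  "nu S \<delta> J = (\<Prod>j\<in>J. 1 / ((1 - \<delta> j) * real (card (S j))))"

end

theory Submission imports Defs begin
lemma hyp_Suc_eq:
  assumes "F \<subseteq> {1..Suc k}" "Suc k \<in> F \<Longrightarrow> v (Suc k) \<in> S (Suc k)"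
  shows "hyp S (Suc k) F v = (\<lambda>(x',y). x'(Suc k := y)) `
     (hyp S k (F - {Suc k}) v \<times> (if Suc k \<in> F then {v (Suc k)} else S (Suc k)))"
proof safe
  fix x assume x: "x \<in> hyp S (Suc k) F v"
  then have xP: "x \<in> PiE {1..Suc k} S" and xF: "\<forall>i\<in>F. x i = v i" by (auto simp: hyp_def Qk_def)
  have xe: "x = (restrict x {1..k})(Suc k := x (Suc k))"
  proof
    fix i show "x i = ((restrict x {1..k})(Suc k := x (Suc k))) i"
    proof (cases "i \<in> {1..Suc k}")
      case True then show ?thesis by (cases "i = Suc k") auto
    next
      case False then show ?thesis using PiE_arb[OF xP False] by auto
    qed
  qed
  have "restrict x {1..k} \<in> PiE {1..k} S" using xP by (simp add: PiE_iff)
  moreover have "\<forall>i\<in>F - {Suc k}. restrict x {1..k} i = v i"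
  proof
    fix i assume i: "i \<in> F - {Suc k}"
    then have "i \<in> {1..k}" using assms(1) by auto
    then show "restrict x {1..k} i = v i" using xF i by simp
  qed
  ultimately have "restrict x {1..k} \<in> hyp S k (F - {Suc k}) v" by (simp add: hyp_def Qk_def)
  moreover have "x (Suc k) \<in> (if Suc k \<in> F then {v (Suc k)} else S (Suc k))"
    using xP xF by (simp add: PiE_iff)
  ultimately have mem: "(restrict x {1..k}, x (Suc k)) \<in> hyp S k (F - {Suc k}) v \<times> (if Suc k \<in> F then {v (Suc k)} else S (Suc k))"
    by (rule SigmaI)
  have eqx: "x = (\<lambda>(x',y). x'(Suc k := y)) (restrict x {1..k}, x (Suc k))"
    by (simp only: case_prod_conv, rule xe)
  show "x \<in> (\<lambda>(x',y). x'(Suc k := y)) `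
     (hyp S k (F - {Suc k}) v \<times> (if Suc k \<in> F then {v (Suc k)} else S (Suc k)))"
    by (rule image_eqI[of x "(\<lambda>(x',y). x'(Suc k := y))" "(restrict x {1..k}, x (Suc k))", OF eqx mem])
next
  fix x' y assume x': "x' \<in> hyp S k (F - {Suc k}) v" and y: "y \<in> (if Suc k \<in> F then {v (Suc k)} else S (Suc k))"
  then have xP: "x' \<in> PiE {1..k} S" and xF: "\<forall>i\<in>F - {Suc k}. x' i = v i" by (simp_all add: hyp_def Qk_def)
  have yS: "y \<in> S (Suc k)" using y assms(2) by (cases "Suc k \<in> F") auto
  have "x'(Suc k := y) \<in> PiE (insert (Suc k) {1..k}) S"
    using yS xP by (rule PiE_fun_upd)
  moreover have "insert (Suc k) {1..k} = {1..Suc k}" by auto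
  ultimately have "x'(Suc k := y) \<in> PiE {1..Suc k} S" by simp
  moreover have "\<forall>i\<in>F. (x'(Suc k := y)) i = v i" using xF y by (cases "Suc k \<in> F") auto
  ultimately show "x'(Suc k := y) \<in> hyp S (Suc k) F v" by (simp add: hyp_def Qk_def)
qed
lemma hyp_Suc_sum:
  assumes "F \<subseteq> {1..Suc k}" "Suc k \<in> F \<Longrightarrow> v (Suc k) \<in> S (Suc k)"
  shows "sum g (hyp S (Suc k) F v) = (\<Sum>x'\<in>hyp S k (F - {Suc k}) v.
      \<Sum>y\<in>(if Suc k \<in> F then {v (Suc k)} else S (Suc k)). g (x'(Suc k := y)))"
proof -
  let ?T = "if Suc k \<in> F then {v (Suc k)} else S (Suc k)"
  have inj: "inj_on (\<lambda>(x',y). x'(Suc k := y)) (hyp S k (F - {Suc k}) v \<times> ?T)"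
  proof (rule inj_onI, clarify)
    fix x1 y1 x2 y2 assume "x1 \<in> hyp S k (F - {Suc k}) v" "x2 \<in> hyp S k (F - {Suc k}) v"
      and eq: "x1(Suc k := y1) = x2(Suc k := y2)"
    then have "x1 (Suc k) = undefined" "x2 (Suc k) = undefined"
      by (auto simp: hyp_def Qk_def PiE_def extensional_def)
    with eq show "x1 = x2 \<and> y1 = y2"
      by (metis fun_upd_idem fun_upd_upd fun_upd_same)
  qed
  have seteq: "hyp S (Suc k) F v = (\<lambda>(x',y). x'(Suc k := y)) ` (hyp S k (F - {Suc k}) v \<times> ?T)"
    by (rule hyp_Suc_eq) (use assms in auto)
  have "sum g (hyp S (Suc k) F v) = sum (g \<circ> (\<lambda>(x',y). x'(Suc k := y))) (hyp S k (F - {Suc k}) v \<times> ?T)"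
    unfolding seteq by (rule sum.reindex[OF inj])
  also have "\<dots> = (\<Sum>x'\<in>hyp S k (F - {Suc k}) v. \<Sum>y\<in>?T. g (x'(Suc k := y)))"
    unfolding sum.cartesian_product by (rule sum.cong) auto
  finally show ?thesis .
qed


lemma PiE_Suc_split:
  assumes "x \<in> PiE {1..Suc k} S"
  shows "restrict x {1..k} \<in> PiE {1..k} S" "x = (restrict x {1..k})(Suc k := x (Suc k))"
    "x (Suc k) \<in> S (Suc k)"
proof -
  show "restrict x {1..k} \<in> PiE {1..k} S" using assms by (simp add: PiE_iff)
  show "x (Suc k) \<in> S (Suc k)" using assms by (simp add: PiE_iff)
  show "x = (restrict x {1..k})(Suc k := x (Suc k))"
  proof
    fix i show "x i = ((restrict x {1..k})(Suc k := x (Suc k))) i"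
    proof (cases "i \<in> {1..Suc k}")
      case True then show ?thesis by (cases "i = Suc k") auto
    next
      case False then show ?thesis using PiE_arb[OF assms False] by auto
    qed
  qed
qed

lemma Pk_le_a: "k \<le> a \<Longrightarrow> Pk S Fs val \<delta> a Pa k x = Pa x"
  by (cases k) auto

lemma Pk_Suc_upd:
  assumes x': "x' \<in> PiE {1..k} S" and na: "\<not> Suc k \<le> a"
  shows "Pk S Fs val \<delta> a Pa (Suc k) (x'(Suc k := y)) =
    (if x'(Suc k := y) \<in> Bset S Fs val (Suc k)
     then max 0 ((alpha S Fs val (Suc k) x' - \<delta> (Suc k)) / (alpha S Fs val (Suc k) x' * (1 - \<delta> (Suc k))))
     else min (1 / (1 - alpha S Fs val (Suc k) x')) (1 / (1 - \<delta> (Suc k)))) *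
    (Pk S Fs val \<delta> a Pa k x' / real (card (S (Suc k))))"
proof -
  have r: "restrict (x'(Suc k := y)) {1..k} = x'"
  proof
    fix i show "restrict (x'(Suc k := y)) {1..k} i = x' i"
    proof (cases "i \<in> {1..k}")
      case True then show ?thesis by auto
    next
      case False then show ?thesis using PiE_arb[OF x' False] by auto
    qed
  qed
  show ?thesis unfolding Pk.simps(2) r Let_def using na by simp
qed

lemma key_alg:
  fixes al m d :: real
  assumes "0 < m" "0 \<le> al" "al \<le> 1" "0 \<le> d" "d \<le> 1/2"
  shows "(al * m) * max 0 ((al - d)/(al*(1-d))) + (m - al * m) * min (1/(1-al)) (1/(1-d)) = m"
proof -
  have d1: "0 < 1 - d" using assms by auto
  show ?thesis
  proof (cases "al = 1")
    case True
    then show ?thesis using d1 by simp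
  next
    case False
    then have a1: "0 < 1 - al" using assms by auto
    show ?thesis
    proof (cases "d \<le> al")
      case True
      have "1/(1-d) \<le> 1/(1-al)" using True a1 d1 by (intro frac_le) auto
      then have mn: "min (1/(1-al)) (1/(1-d)) = 1/(1-d)" by (rule min_absorb2)
      show ?thesis
      proof (cases "al = 0")
        case True
        then have "d = 0" using \<open>d \<le> al\<close> assms by auto
        then show ?thesis using True mn by simp
      next
        case False
        then have a0: "0 < al" using assms by auto
        have "(al - d)/(al*(1-d)) \<ge> 0" using True a0 d1 by simp
        then have mx: "max 0 ((al - d)/(al*(1-d))) = (al - d)/(al*(1-d))" by simp
        have e1: "(al*m)*((al-d)/(al*(1-d))) = m*(al-d)/(1-d)" using a0 d1 by (simp add: field_simps)
        have e2: "(m - al*m)*(1/(1-d)) = m*(1-al)/(1-d)" by (simp add: field_simps)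
        have e3: "m*(al-d)/(1-d) + m*(1-al)/(1-d) = m*(1-d)/(1-d)" by (simp add: add_divide_distrib[symmetric] algebra_simps)
        show ?thesis unfolding mx mn e1 e2 e3 using d1 by simp
      qed
    next
      case False
      have "1/(1-al) \<le> 1/(1-d)" using False a1 d1 by (intro frac_le) auto
      then have mn: "min (1/(1-al)) (1/(1-d)) = 1/(1-al)" by (rule min_absorb1)
      have "(al - d)/(al*(1-d)) \<le> 0" using False assms d1
        by (intro divide_nonpos_nonneg) auto
      then have mx: "max 0 ((al - d)/(al*(1-d))) = 0" by simp
      show ?thesis unfolding mx mn using a1 by (simp add: field_simps)
    qed
  qed
qed

lemma coef_bounds:
  fixes al d :: real
  assumes "0 \<le> al" "al \<le> 1" "0 \<le> d" "d \<le> 1/2"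
  shows "0 \<le> max 0 ((al - d)/(al*(1-d)))" "max 0 ((al - d)/(al*(1-d))) \<le> 1/(1-d)"
    "0 \<le> min (1/(1-al)) (1/(1-d))" "min (1/(1-al)) (1/(1-d)) \<le> 1/(1-d)"
proof -
  have d1: "0 < 1 - d" using assms by auto
  show "0 \<le> max 0 ((al - d)/(al*(1-d)))" by simp
  show "min (1/(1-al)) (1/(1-d)) \<le> 1/(1-d)" by simp
  show "0 \<le> min (1/(1-al)) (1/(1-d))" using assms d1 by simp
  show "max 0 ((al - d)/(al*(1-d))) \<le> 1/(1-d)"
  proof (cases "al = 0")
    case True then show ?thesis using d1 by simp
  next
    case False
    then have a0: "0 < al" using assms by auto
    have "(al - d)/(al*(1-d)) = ((al - d)/al) * (1/(1-d))" by simp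
    also have "\<dots> \<le> 1 * (1/(1-d))"
      using a0 d1 assms by (intro mult_right_mono) (auto simp: divide_le_eq)
    finally show ?thesis using d1 by simp
  qed
qed


lemma step_point:
  fixes S :: "nat \<Rightarrow> 'a set"
  assumes x': "x' \<in> PiE {1..k} S" and na: "\<not> Suc k \<le> a" and fin: "finite (S (Suc k))"
    and cd: "card (S (Suc k)) \<ge> 2"
    and d0: "0 \<le> \<delta> (Suc k)" and d1: "\<delta> (Suc k) \<le> 1/2"
    and P: "0 \<le> Pk S Fs val \<delta> a Pa k x'"
  shows "sum (\<lambda>y. Pk S Fs val \<delta> a Pa (Suc k) (x'(Suc k := y))) (S (Suc k)) = Pk S Fs val \<delta> a Pa k x'"
    "\<And>y. 0 \<le> Pk S Fs val \<delta> a Pa (Suc k) (x'(Suc k := y))"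
    "\<And>y. Pk S Fs val \<delta> a Pa (Suc k) (x'(Suc k := y)) \<le>
        Pk S Fs val \<delta> a Pa k x' / ((1 - \<delta> (Suc k)) * real (card (S (Suc k))))"
proof -
  define al where "al = alpha S Fs val (Suc k) x'"
  define d where "d = \<delta> (Suc k)"
  define m where "m = real (card (S (Suc k)))"
  define p where "p = Pk S Fs val \<delta> a Pa k x' / m"
  define cB where "cB = max 0 ((al - d)/(al*(1-d)))"
  define cN where "cN = min (1/(1-al)) (1/(1-d))"
  define Bx where "Bx = {y \<in> S (Suc k). x'(Suc k := y) \<in> Bset S Fs val (Suc k)}"
  have m0: "0 < m" using cd unfolding m_def by simp
  have Bsub: "Bx \<subseteq> S (Suc k)" unfolding Bx_def by auto
  have finB: "finite Bx" using Bsub fin by (rule finite_subset)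
  have bm: "card Bx \<le> card (S (Suc k))" using fin Bsub by (rule card_mono)
  have al_eq: "al = real (card Bx) / m" unfolding al_def alpha_def Bx_def m_def by simp
  have al0: "0 \<le> al" unfolding al_eq using m0 by simp
  have al1: "al \<le> 1" unfolding al_eq using m0 bm by (simp add: m_def)
  have b_eq: "real (card Bx) = al * m" unfolding al_eq using m0 by simp
  have dd: "0 \<le> d" "d \<le> 1/2" using d0 d1 unfolding d_def by auto
  have pk: "\<And>y. Pk S Fs val \<delta> a Pa (Suc k) (x'(Suc k := y)) =
     (if x'(Suc k := y) \<in> Bset S Fs val (Suc k) then cB else cN) * p"
    unfolding cB_def cN_def al_def d_def p_def m_def by (rule Pk_Suc_upd[OF x' na])
  have cb: "0 \<le> cB" "cB \<le> 1/(1-d)" "0 \<le> cN" "cN \<le> 1/(1-d)"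
    unfolding cB_def cN_def using coef_bounds[OF al0 al1 dd] by auto
  have p0: "0 \<le> p" unfolding p_def using P m0 by simp
  show "\<And>y. 0 \<le> Pk S Fs val \<delta> a Pa (Suc k) (x'(Suc k := y))"
    unfolding pk using cb p0 by simp
  show "\<And>y. Pk S Fs val \<delta> a Pa (Suc k) (x'(Suc k := y)) \<le>
        Pk S Fs val \<delta> a Pa k x' / ((1 - \<delta> (Suc k)) * real (card (S (Suc k))))"
  proof -
    fix y
    have "(if x'(Suc k := y) \<in> Bset S Fs val (Suc k) then cB else cN) * p \<le> (1/(1-d)) * p"
      using cb p0 by (intro mult_right_mono) auto
    also have "\<dots> = Pk S Fs val \<delta> a Pa k x' / ((1 - \<delta> (Suc k)) * real (card (S (Suc k))))"
      unfolding p_def d_def m_def by simp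
    finally show "Pk S Fs val \<delta> a Pa (Suc k) (x'(Suc k := y)) \<le>
        Pk S Fs val \<delta> a Pa k x' / ((1 - \<delta> (Suc k)) * real (card (S (Suc k))))"
      unfolding pk .
  qed
  have "sum (\<lambda>y. Pk S Fs val \<delta> a Pa (Suc k) (x'(Suc k := y))) (S (Suc k))
      = sum (\<lambda>y. (if y \<in> Bx then cB else cN) * p) (S (Suc k))"
    unfolding pk Bx_def by (rule sum.cong) auto
  also have "\<dots> = sum (\<lambda>y. (if y \<in> Bx then cB else cN) * p) Bx
      + sum (\<lambda>y. (if y \<in> Bx then cB else cN) * p) (S (Suc k) - Bx)"
    by (subst sum.subset_diff[OF Bsub fin]) (rule add.commute)
  also have "\<dots> = real (card Bx) * cB * p + real (card (S (Suc k) - Bx)) * cN * p"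
    by simp
  also have "real (card (S (Suc k) - Bx)) = m - al * m"
    using card_Diff_subset[OF finB Bsub] bm b_eq unfolding m_def by (simp add: of_nat_diff)
  also have "real (card Bx) * cB * p + (m - al * m) * cN * p
     = ((al * m) * cB + (m - al * m) * cN) * p" unfolding b_eq by (simp add: algebra_simps)
  also have "(al * m) * cB + (m - al * m) * cN = m"
    unfolding cB_def cN_def by (rule key_alg[OF m0 al0 al1 dd])
  also have "m * p = Pk S Fs val \<delta> a Pa k x'" unfolding p_def using m0 by simp
  finally show "sum (\<lambda>y. Pk S Fs val \<delta> a Pa (Suc k) (x'(Suc k := y))) (S (Suc k)) = Pk S Fs val \<delta> a Pa k x'" .
qed



theorem lemma3p3:
  fixes S :: "nat \<Rightarrow> 'a set" and n a k :: nat and \<F> :: "nat set set"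
    and val :: "nat set \<Rightarrow> nat \<Rightarrow> 'a" and \<delta> :: "nat \<Rightarrow> real"
    and Pa :: "(nat \<Rightarrow> 'a) \<Rightarrow> real" and F I J :: "nat set" and v :: "nat \<Rightarrow> 'a"
  assumes S_fin: "\<And>i. i \<in> {1..n} \<Longrightarrow> finite (S i)"
    and S_card: "\<And>i. i \<in> {1..n} \<Longrightarrow> card (S i) \<ge> 2"
    and F_sub: "\<And>G. G \<in> \<F> \<Longrightarrow> G \<noteq> {} \<and> G \<subseteq> {1..n}"
    and val_in: "\<And>G i. G \<in> \<F> \<Longrightarrow> i \<in> G \<Longrightarrow> val G i \<in> S i"
    and a_le: "a \<le> n"
    and Pa_nonneg: "\<And>x. x \<in> Qk S a \<Longrightarrow> Pa x \<ge> 0"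
    and Pa_sum: "sum Pa (Qk S a) = 1"
    and delta: "\<And>j. j \<in> {a+1..n} \<Longrightarrow> 0 \<le> \<delta> j \<and> \<delta> j \<le> 1/2"
    and k: "a \<le> k" "k \<le> n"
    and FA: "F \<subseteq> {1..k}" "\<And>i. i \<in> F \<Longrightarrow> v i \<in> S i"
    and IJ: "F = I \<union> J" "I \<subseteq> {1..a}" "J \<subseteq> {a+1..k}"
  shows "sum (Pk S \<F> val \<delta> a Pa k) (hyp S k F v) \<le> cI S a Pa I * nu S \<delta> J"

proof -
  let ?P = "Pk S \<F> val \<delta> a Pa"
  have nonneg: "\<forall>x\<in>Qk S m. 0 \<le> ?P m x" if am: "a \<le> m" and mn: "m \<le> n" for m
    using am
  proof (induction m rule: dec_induct)
    case base
    then show ?case using Pa_nonneg by (simp add: Pk_le_a)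
  next
    case (step m')
    show ?case
    proof
      fix x assume "x \<in> Qk S (Suc m')"
      then have xP: "x \<in> PiE {1..Suc m'} S" by (simp add: Qk_def)
      note sp = PiE_Suc_split[OF xP]
      have sm: "Suc m' \<in> {1..n}" "Suc m' \<in> {a+1..n}" using step.hyps mn by auto
      have "0 \<le> ?P (Suc m') ((restrict x {1..m'})(Suc m' := x (Suc m')))"
        by (rule step_point(2)[OF sp(1) _ S_fin[OF sm(1)] S_card[OF sm(1)]])
          (use step.hyps step.IH sp(1) delta[OF sm(2)] in \<open>auto simp: Qk_def\<close>)
      then show "0 \<le> ?P (Suc m') x" by (simp only: sp(2)[symmetric])
    qed
  qed
  have main: "\<forall>F J v. F \<subseteq> {1..m} \<longrightarrow> (\<forall>i\<in>F. v i \<in> S i) \<longrightarrow> F = I \<union> J \<longrightarrow> J \<subseteq> {a+1..m}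
      \<longrightarrow> sum (?P m) (hyp S m F v) \<le> cI S a Pa I * nu S \<delta> J"
    if am: "a \<le> m" and mn: "m \<le> n" for m
    using am
  proof (induction m rule: dec_induct)
    case base
    show ?case
    proof (intro allI impI)
      fix F J v assume F1: "F \<subseteq> {1..a}" and F2: "\<forall>i\<in>F. v i \<in> S i" and F3: "F = I \<union> J"
        and J1: "J \<subseteq> {a+1..a}"
      have J0: "J = {}" using J1 by auto
      have FI: "F = I" using F3 J0 by simp
      have "sum (?P a) (hyp S a F v) = sum Pa (hyp S a I (restrict v I))"
        unfolding FI by (rule sum.cong) (auto simp: Pk_le_a hyp_def)
      also have "\<dots> \<le> cI S a Pa I" unfolding cI_def
      proof (rule Max_ge)
        have "finite I" using IJ(2) finite_subset by blast
        moreover have "\<And>i. i \<in> I \<Longrightarrow> finite (S i)" using IJ(2) a_le by (intro S_fin) auto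
        ultimately show "finite ((\<lambda>v. sum Pa (hyp S a I v)) ` PiE I S)"
          by (intro finite_imageI finite_PiE)
        have "restrict v I \<in> PiE I S" using F2 FI by simp
        then show "sum Pa (hyp S a I (restrict v I)) \<in> (\<lambda>v. sum Pa (hyp S a I v)) ` PiE I S"
          by (rule imageI)
      qed
      finally show "sum (?P a) (hyp S a F v) \<le> cI S a Pa I * nu S \<delta> J"
        using J0 by (simp add: nu_def)
    qed
  next
    case (step m)
    have sm: "Suc m \<in> {1..n}" "Suc m \<in> {a+1..n}" using step.hyps mn by auto
    have na: "\<not> Suc m \<le> a" using step.hyps by simp
    note finS = S_fin[OF sm(1)] and cardS = S_card[OF sm(1)] and dl = delta[OF sm(2)]
    show ?case
    proof (intro allI impI)
      fix F J v assume F1: "F \<subseteq> {1..Suc m}" and F2: "\<forall>i\<in>F. v i \<in> S i" and F3: "F = I \<union> J"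
        and J1: "J \<subseteq> {a+1..Suc m}"
      define F' where "F' = F - {Suc m}"
      define J' where "J' = J - {Suc m}"
      have nI: "Suc m \<notin> I" using IJ(2) step.hyps by auto
      have F'1: "F' \<subseteq> {1..m}" using F1 unfolding F'_def by auto
      have F'2: "\<forall>i\<in>F'. v i \<in> S i" using F2 unfolding F'_def by auto
      have F'3: "F' = I \<union> J'" using F3 nI unfolding F'_def J'_def by auto
      have J'1: "J' \<subseteq> {a+1..m}" using J1 unfolding J'_def by auto
      have IH: "sum (?P m) (hyp S m F' v) \<le> cI S a Pa I * nu S \<delta> J'"
        using step.IH F'1 F'2 F'3 J'1 by blast
      have dec: "sum (?P (Suc m)) (hyp S (Suc m) F v) = (\<Sum>x'\<in>hyp S m F' v.
          \<Sum>y\<in>(if Suc m \<in> F then {v (Suc m)} else S (Suc m)). ?P (Suc m) (x'(Suc m := y)))"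
        unfolding F'_def by (rule hyp_Suc_sum) (use F1 F2 in auto)
      have xPi: "x' \<in> PiE {1..m} S" if "x' \<in> hyp S m F' v" for x'
        using that by (simp add: hyp_def Qk_def)
      have xnn: "0 \<le> ?P m x'" if "x' \<in> hyp S m F' v" for x'
        using nonneg[OF step.hyps(1)] xPi[OF that] step.hyps mn by (simp add: Qk_def)
      have spt: "sum (\<lambda>y. ?P (Suc m) (x'(Suc m := y))) (S (Suc m)) = ?P m x' \<and>
          ?P (Suc m) (x'(Suc m := v (Suc m))) \<le> ?P m x' / ((1 - \<delta> (Suc m)) * real (card (S (Suc m))))"
        if h: "x' \<in> hyp S m F' v" for x'
      proof -
        note sp = step_point[OF xPi[OF h] na finS cardS conjunct1[OF dl] conjunct2[OF dl] xnn[OF h]]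
        show ?thesis using sp(1) sp(3) by blast
      qed
      show "sum (?P (Suc m)) (hyp S (Suc m) F v) \<le> cI S a Pa I * nu S \<delta> J"
      proof (cases "Suc m \<in> F")
        case True
        define c where "c = (1 - \<delta> (Suc m)) * real (card (S (Suc m)))"
        have c0: "0 < c" unfolding c_def using dl cardS by simp
        have JJ: "J = insert (Suc m) J'" using True F3 nI unfolding J'_def by auto
        have nJ': "Suc m \<notin> J'" by (simp add: J'_def)
        have finJ': "finite J'" using J'1 finite_subset by blast
        have nuJ: "nu S \<delta> J = (1/c) * nu S \<delta> J'"
          unfolding JJ nu_def c_def using finJ' nJ' by (simp add: prod.insert)
        have "sum (?P (Suc m)) (hyp S (Suc m) F v) = (\<Sum>x'\<in>hyp S m F' v. ?P (Suc m) (x'(Suc m := v (Suc m))))"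
          unfolding dec using True by simp
        also have "\<dots> \<le> (\<Sum>x'\<in>hyp S m F' v. ?P m x' / c)"
        proof (rule sum_mono)
          fix x' assume "x' \<in> hyp S m F' v"
          then show "?P (Suc m) (x'(Suc m := v (Suc m))) \<le> ?P m x' / c"
            unfolding c_def using spt by blast
        qed
        also have "\<dots> = (1/c) * sum (?P m) (hyp S m F' v)"
          by (simp add: sum_distrib_left)
        also have "\<dots> \<le> (1/c) * (cI S a Pa I * nu S \<delta> J')"
          using IH c0 by (intro mult_left_mono) auto
        also have "\<dots> = cI S a Pa I * nu S \<delta> J" unfolding nuJ by (rule mult.left_commute)
        finally show ?thesis .
      next
        case False
        have JJ: "J' = J" using False F3 unfolding J'_def by auto
        have "sum (?P (Suc m)) (hyp S (Suc m) F v) = (\<Sum>x'\<in>hyp S m F' v. ?P m x')"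
          unfolding dec using False by (intro sum.cong refl) (use spt in auto)
        also have "\<dots> \<le> cI S a Pa I * nu S \<delta> J" unfolding JJ[symmetric] by (rule IH)
        finally show ?thesis .
      qed
    qed
  qed
  show ?thesis by (rule main[OF k, rule_format, where F=F and J=J and v=v]) (use FA IJ in auto)
qed

end
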